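(* Let $N\in\mathbb{Z}$ and let $(a_n)_{n\le N}$ be elements of $\mathbb{C}_p$ with $a_n\to0$ as $n\to-\infty$. If the function $\sum_{n=-\infty}^N a_n(\mathbf x-\mathbf 1)^{\star n}$ (a uniformly convergent series in $C(\mathbb{Z}_p,\mathbb{C}_p)$) is identically zero, then $a_n=0$ for all $n\le N$. Consequently every function of the form $\sum_{n=-\infty}^N a_n(\mathbf x-\mathbf 1)^{\star n}$ determines its coefficients $a_n$ uniquely.
   Context: Fix a prime $p$. $\mathbb{C}_p$ denotes the completion of an algebraic closure of $\mathbb{Q}_p$, with absolute value $|\cdot|$ normalized by $|p|=1/p$. $C(\mathbb{Z}_p,\mathbb{C}_p)$ is the $\mathbb{C}_p$-Banach space of continuous functions $\mathbb{Z}_p\to\mathbb{C}_p$ with the sup-norm $\|\cdot\|$. For $n\in\mathbb{Z}_{\ge0}$ and $x\in\mathbb{Z}_p$, $\binom{x}{n}=x(x-1)\cdots(x-n+1)/n!$. For $y\in\mathbb{Z}_p$ and $\phi\in C(\mathbb{Z}_p,\mathbb{C}_p)$, $S^y(\phi)(x)=\sum_{k\ge0}(-1)^k k!\binom yk\binom xk\phi(x-k)$; each $S^y$ is norm-preserving. $\mathbf 1$ is the constant function $1$, $\mathbf x$ is $x\mapsto x$, and for $n\in\mathbb{Z}$, $(\mathbf x-\mathbf 1)^{\star n}:=(-1)^nS^n(\mathbf 1)$ (these have sup-norm $1$). *)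

theory Defs
  imports "HOL-Computational_Algebra.Polynomial"
begin

text \<open>We work inside an arbitrary field K of characteristic 0
  carrying an absolute value nrm which is non-archimedean, complete, with nrm p = 1/p, and
  K algebraically closed. Inside K, Q_p is the closure of the rationals, Z_p the closure of
  the integers, and C_p the closure of the set of elements algebraic over Q_p (this is the
  completion of an algebraic closure of Q_p, unique up to isometric isomorphism).\<close>

definition nonarch_abs :: "('a::field_char_0 \<Rightarrow> real) \<Rightarrow> bool" where
  "nonarch_abs nrm \<longleftrightarrow>
     (\<forall>x. nrm x \<ge> 0) \<and> (\<forall>x. nrm x = 0 \<longleftrightarrow> x = 0) \<and>
     (\<forall>x y. nrm (x * y) = nrm x * nrm y) \<and>
     (\<forall>x y. nrm (x + y) \<le> max (nrm x) (nrm y))"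

definition nconv :: "('a::field_char_0 \<Rightarrow> real) \<Rightarrow> (nat \<Rightarrow> 'a) \<Rightarrow> 'a \<Rightarrow> bool" where
  "nconv nrm s l \<longleftrightarrow> (\<forall>e>0. \<exists>M. \<forall>m\<ge>M. nrm (s m - l) < e)"

definition ncauchy :: "('a::field_char_0 \<Rightarrow> real) \<Rightarrow> (nat \<Rightarrow> 'a) \<Rightarrow> bool" where
  "ncauchy nrm s \<longleftrightarrow> (\<forall>e>0. \<exists>M. \<forall>m\<ge>M. \<forall>n\<ge>M. nrm (s m - s n) < e)"

definition ncomplete :: "('a::field_char_0 \<Rightarrow> real) \<Rightarrow> bool" where
  "ncomplete nrm \<longleftrightarrow> (\<forall>s. ncauchy nrm s \<longrightarrow> (\<exists>l. nconv nrm s l))"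

definition alg_closed_field :: "'a::field itself \<Rightarrow> bool" where
  "alg_closed_field _ \<longleftrightarrow> (\<forall>q::'a poly. degree q > 0 \<longrightarrow> (\<exists>x. poly q x = 0))"

definition padic_ambient :: "nat \<Rightarrow> ('a::field_char_0 \<Rightarrow> real) \<Rightarrow> bool" where
  "padic_ambient p nrm \<longleftrightarrow> prime p \<and> nonarch_abs nrm \<and> ncomplete nrm \<and>
     alg_closed_field TYPE('a) \<and> nrm (of_nat p) = 1 / real p"

definition nclosure :: "('a::field_char_0 \<Rightarrow> real) \<Rightarrow> 'a set \<Rightarrow> 'a set" where
  "nclosure nrm S = {x. \<forall>e>0. \<exists>y\<in>S. nrm (x - y) < e}"

definition Qp :: "('a::field_char_0 \<Rightarrow> real) \<Rightarrow> 'a set" where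
  "Qp nrm = nclosure nrm (range of_rat)"

definition Zp :: "('a::field_char_0 \<Rightarrow> real) \<Rightarrow> 'a set" where
  "Zp nrm = nclosure nrm (range of_int)"

definition Cp :: "('a::field_char_0 \<Rightarrow> real) \<Rightarrow> 'a set" where
  "Cp nrm = nclosure nrm
     {x. \<exists>q. q \<noteq> 0 \<and> (\<forall>i. coeff q i \<in> Qp nrm) \<and> poly q x = 0}"

definition nsums :: "('a::field_char_0 \<Rightarrow> real) \<Rightarrow> (nat \<Rightarrow> 'a) \<Rightarrow> 'a \<Rightarrow> bool" where
  "nsums nrm f s \<longleftrightarrow> nconv nrm (\<lambda>m. \<Sum>k<m. f k) s"

definition nsuminf :: "('a::field_char_0 \<Rightarrow> real) \<Rightarrow> (nat \<Rightarrow> 'a) \<Rightarrow> 'a" where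
  "nsuminf nrm f = (THE s. nsums nrm f s)"

definition binom :: "'a::field_char_0 \<Rightarrow> nat \<Rightarrow> 'a" where
  "binom x k = (\<Prod>i<k. (x - of_nat i)) / of_nat (fact k)"

definition Sop :: "('a::field_char_0 \<Rightarrow> real) \<Rightarrow> 'a \<Rightarrow> ('a \<Rightarrow> 'a) \<Rightarrow> 'a \<Rightarrow> 'a" where
  "Sop nrm y \<phi> x = nsuminf nrm
     (\<lambda>k. (-1) ^ k * of_nat (fact k) * binom y k * binom x k * \<phi> (x - of_nat k))"

text \<open>(x - 1)^{star n} = (-1)^n S^n(1), for n an integer\<close>
definition xm1_star :: "('a::field_char_0 \<Rightarrow> real) \<Rightarrow> int \<Rightarrow> 'a \<Rightarrow> 'a" where
  "xm1_star nrm n x = (-1) ^ nat \<bar>n\<bar> * Sop nrm (of_int n) (\<lambda>_. 1) x"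

end

theory Submission imports Defs begin

lemma binom_gchoose: "binom x k = x gchoose k"
  by (simp add: binom_def gbinomial_prod_rev atLeast0LessThan)

context fixes nrm :: "'a::field_char_0 \<Rightarrow> real" assumes na: "nonarch_abs nrm"
begin
lemma n_ge0: "nrm x \<ge> 0" using na by (simp add: nonarch_abs_def)
lemma n_eq0: "nrm x = 0 \<longleftrightarrow> x = 0" using na by (simp add: nonarch_abs_def)
lemma n_mult: "nrm (x*y) = nrm x * nrm y" using na by (simp add: nonarch_abs_def)
lemma n_add: "nrm (x+y) \<le> max (nrm x) (nrm y)" using na by (simp add: nonarch_abs_def)
lemma n_0[simp]: "nrm 0 = 0" using n_eq0 by simp
lemma n_1[simp]: "nrm 1 = 1"
proof -
  have "nrm 1 = nrm 1 * nrm 1" using n_mult[of 1 1] by simp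
  moreover have "nrm 1 \<noteq> 0" using n_eq0 by simp
  ultimately show ?thesis by (metis mult_cancel_left1)
qed
lemma n_m1[simp]: "nrm (-1) = 1"
proof -
  have "nrm (-1) * nrm (-1) = 1" using n_mult[of "-1" "-1"] by simp
  then show ?thesis using n_ge0[of "-1"]
    by (metis abs_of_nonneg mult_cancel_left1 n_1 n_mult real_sqrt_abs2 real_sqrt_one) 
qed
lemma n_uminus[simp]: "nrm (-x) = nrm x"
  using n_mult[of "-1" x] by simp
lemma n_commute: "nrm (x - y) = nrm (y - x)"
  by (metis minus_diff_eq n_uminus)
lemma n_of_nat: "nrm (of_nat n) \<le> 1"
proof (induction n)
  case (Suc n) then show ?case using n_add[of 1 "of_nat n"] by simp
qed simp
lemma n_Ints: "x \<in> \<int> \<Longrightarrow> nrm x \<le> 1"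
proof -
  assume "x \<in> \<int>"
  then obtain z where z: "x = of_int z" by (auto elim: Ints_cases)
  show ?thesis
  proof (cases z rule: int_cases)
    case (nonneg n) then show ?thesis using z n_of_nat by simp
  next
    case (neg n)
    then have "x = - (1 + of_nat n)" using z by simp
    then show ?thesis using n_of_nat[of "Suc n"] n_uminus[of "1 + of_nat n"] by simp
  qed
qed
lemma n_power_m1[simp]: "nrm ((-1)^k) = 1"
  by (induction k) (simp_all add: n_mult)
lemma n_sum_less: "finite A \<Longrightarrow> e > 0 \<Longrightarrow> (\<And>k. k \<in> A \<Longrightarrow> nrm (f k) < e) \<Longrightarrow> nrm (sum f A) < e"
proof (induction A rule: finite_induct)
  case (insert x F)
  then have "nrm (f x) < e" "nrm (sum f F) < e" by auto
  then show ?case using n_add[of "f x" "sum f F"] insert(1,2)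
    by (simp add: max_less_iff_conj order_le_less_trans)
qed simp
lemma n_zero: "(\<And>e. e > 0 \<Longrightarrow> nrm x < e) \<Longrightarrow> x = 0"
  by (metis n_eq0 n_ge0 order_less_irrefl order_neq_le_trans)

lemma nconv_unique: "nconv nrm s l \<Longrightarrow> nconv nrm s k \<Longrightarrow> l = k"
proof -
  assume a: "nconv nrm s l" "nconv nrm s k"
  show "l = k"
  proof (rule ccontr)
    assume "l \<noteq> k"
    then have "nrm (l - k) \<noteq> 0" using n_eq0 by simp
    then have pos: "nrm (l - k) > 0" using n_ge0[of "l - k"] by linarith
    obtain M1 where "\<forall>m\<ge>M1. nrm (s m - l) < nrm (l - k)"
      using a(1) pos unfolding nconv_def by blast
    moreover obtain M2 where "\<forall>m\<ge>M2. nrm (s m - k) < nrm (l - k)"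
      using a(2) pos unfolding nconv_def by blast
    ultimately have h1: "nrm (s (max M1 M2) - l) < nrm (l - k)" and h2: "nrm (s (max M1 M2) - k) < nrm (l - k)" by auto
    have "nrm (l - k) = nrm ((s (max M1 M2) - k) + (-(s (max M1 M2) - l)))" by (simp add: algebra_simps)
    also have "\<dots> \<le> max (nrm (s (max M1 M2) - k)) (nrm (-(s (max M1 M2) - l)))" by (rule n_add)
    also have "\<dots> < nrm (l - k)"
    proof -
      have h1': "nrm (-(s (max M1 M2) - l)) < nrm (l - k)" using h1 by (simp only: n_uminus)
      show ?thesis using h2 h1' by (rule max_less_iff_conj[THEN iffD2, OF conjI])
    qed
    finally show False by simp
  qed
qed

lemma nsuminf_eq: "nsums nrm f s \<Longrightarrow> nsuminf nrm f = s"
proof -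
  assume s: "nsums nrm f s"
  show ?thesis unfolding nsuminf_def
  proof (rule the_equality)
    fix t assume "nsums nrm f t"
    then show "t = s" using s nconv_unique unfolding nsums_def by blast
  qed (rule s)
qed

lemma nconv_add: "nconv nrm s l \<Longrightarrow> nconv nrm t k \<Longrightarrow> nconv nrm (\<lambda>m. s m + t m) (l + k)"
  unfolding nconv_def
proof (intro allI impI)
  fix e :: real assume e: "e > 0"
  assume A: "\<forall>e>0. \<exists>M. \<forall>m\<ge>M. nrm (s m - l) < e" and B: "\<forall>e>0. \<exists>M. \<forall>m\<ge>M. nrm (t m - k) < e"
  obtain M1 where M1: "\<forall>m\<ge>M1. nrm (s m - l) < e" using A e by blast
  obtain M2 where M2: "\<forall>m\<ge>M2. nrm (t m - k) < e" using B e by blast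
  show "\<exists>M. \<forall>m\<ge>M. nrm (s m + t m - (l + k)) < e"
  proof (intro exI allI impI)
    fix m assume m: "max M1 M2 \<le> m"
    have h1: "nrm (s m - l) < e" using M1 m by simp
    have h2: "nrm (t m - k) < e" using M2 m by simp
    have "nrm (s m + t m - (l + k)) = nrm ((s m - l) + (t m - k))" by (simp add: algebra_simps)
    also have "\<dots> \<le> max (nrm (s m - l)) (nrm (t m - k))" by (rule n_add)
    also have "\<dots> < e" using h1 h2 by (rule max_less_iff_conj[THEN iffD2, OF conjI])
    finally show "nrm (s m + t m - (l + k)) < e" .
  qed
qed

lemma nsums_add: "nsums nrm f s \<Longrightarrow> nsums nrm g t \<Longrightarrow> nsums nrm (\<lambda>m. f m + g m) (s + t)"
  unfolding nsums_def sum.distrib by (rule nconv_add)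

lemma nsums_cmult: "nsums nrm f s \<Longrightarrow> nsums nrm (\<lambda>m. c * f m) (c * s)"
proof (cases "c = 0")
  case True then show ?thesis by (simp add: nsums_def nconv_def)
next
  case False
  then have c: "nrm c > 0" using n_eq0 n_ge0 by (metis less_eq_real_def)
  assume f: "nsums nrm f s"
  show ?thesis unfolding nsums_def nconv_def
  proof (intro allI impI)
    fix e :: real assume e: "e > 0"
    have "e / nrm c > 0" using e c by simp
    then obtain M where M: "\<forall>m\<ge>M. nrm ((\<Sum>k<m. f k) - s) < e / nrm c"
      using f unfolding nsums_def nconv_def by blast
    show "\<exists>M. \<forall>m\<ge>M. nrm ((\<Sum>k<m. c * f k) - c * s) < e"
    proof (intro exI allI impI)
      fix m assume "M \<le> m"
      then have "nrm ((\<Sum>k<m. f k) - s) < e / nrm c" using M by auto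
      moreover have "(\<Sum>k<m. c * f k) - c * s = c * ((\<Sum>k<m. f k) - s)"
        by (simp add: sum_distrib_left right_diff_distrib)
      ultimately show "nrm ((\<Sum>k<m. c * f k) - c * s) < e"
        using c by (simp add: n_mult pos_less_divide_eq mult.commute)
    qed
  qed
qed

lemma nsums_zero: "nsums nrm (\<lambda>m. 0) 0"
  by (simp add: nsums_def nconv_def)

lemma nsums_sum: "finite I \<Longrightarrow> (\<And>i. i \<in> I \<Longrightarrow> nsums nrm (f i) (s i)) \<Longrightarrow>
   nsums nrm (\<lambda>m. \<Sum>i\<in>I. f i m) (\<Sum>i\<in>I. s i)"
proof (induction I rule: finite_induct)
  case empty then show ?case using nsums_zero by simp
next
  case (insert x F) then show ?case using nsums_add[of "f x" "s x"] by simp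
qed

lemma nsums_finite: "(\<And>k. k \<ge> K \<Longrightarrow> f k = 0) \<Longrightarrow> nsums nrm f (\<Sum>k<K. f k)"
  unfolding nsums_def nconv_def
proof (intro allI impI exI)
  fix e :: real and m assume z: "\<And>k. k \<ge> K \<Longrightarrow> f k = 0" and e: "e > 0" and m: "K \<le> m"
  have "(\<Sum>k<m. f k) = (\<Sum>k<K. f k)"
    using m z by (intro sum.mono_neutral_right) auto
  then show "nrm ((\<Sum>k<m. f k) - (\<Sum>k<K. f k)) < e" using e by simp
qed

lemma nsums_null: assumes c: "ncomplete nrm" and f: "\<forall>e>0. \<exists>M. \<forall>m\<ge>M. nrm (f m) < e"
  shows "\<exists>s. nsums nrm f s"
proof -
  have "ncauchy nrm (\<lambda>m. \<Sum>k<m. f k)" unfolding ncauchy_def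
  proof (intro allI impI)
    fix e :: real assume e: "e > 0"
    then obtain M where M: "\<forall>m\<ge>M. nrm (f m) < e" using f by blast
    have key: "nrm ((\<Sum>k<m. f k) - (\<Sum>k<n. f k)) < e" if "M \<le> n" "n \<le> m" for m n
    proof -
      have "(\<Sum>k<m. f k) - (\<Sum>k<n. f k) = (\<Sum>k\<in>{n..<m}. f k)"
        using that by (metis atLeast0LessThan sum.atLeastLessThan_concat zero_le add_diff_cancel_left')
      also have "nrm \<dots> < e" using e M that by (intro n_sum_less) auto
      finally show ?thesis .
    qed
    show "\<exists>M. \<forall>m\<ge>M. \<forall>n\<ge>M. nrm ((\<Sum>k<m. f k) - (\<Sum>k<n. f k)) < e"
    proof (intro exI allI impI)
      fix m n assume "M \<le> m" "M \<le> n"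
      then show "nrm ((\<Sum>k<m. f k) - (\<Sum>k<n. f k)) < e"
        using key[of n m] key[of m n] n_commute by (cases "n \<le> m") auto
    qed
  qed
  then show ?thesis using c unfolding ncomplete_def nsums_def by blast
qed

end

lemma binom_Suc: "binom x (Suc j) * of_nat (Suc j) = binom x j * (x - of_nat j)"
proof -
  have f: "of_nat (fact (Suc j)) = (of_nat (Suc j) * of_nat (fact j) :: 'a)"
    unfolding fact_Suc of_nat_mult by simp
  have "of_nat (fact j) \<noteq> (0::'a)" by simp
  then show ?thesis unfolding binom_def prod.lessThan_Suc f
    by (simp add: field_simps del: of_nat_Suc)
qed

definition Tz :: "('a::field_char_0 \<Rightarrow> real) \<Rightarrow> (int \<Rightarrow> 'a) \<Rightarrow> int \<Rightarrow> ('a \<Rightarrow> 'a) \<Rightarrow> bool" where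
  "Tz nr h N g \<longleftrightarrow> nsums nr (\<lambda>m. h (N - int m) * g (of_int (N - int m))) 0"

context fixes nrm :: "'a::field_char_0 \<Rightarrow> real" assumes na: "nonarch_abs nrm"
begin

lemma Tz_add: assumes "Tz nrm h N f" "Tz nrm h N g" shows "Tz nrm h N (\<lambda>x. f x + g x)"
proof -
  have "nsums nrm (\<lambda>m. h (N - int m) * f (of_int (N - int m)) + h (N - int m) * g (of_int (N - int m))) (0 + 0)"
    using assms unfolding Tz_def by (rule nsums_add[OF na])
  then show ?thesis unfolding Tz_def by (simp add: distrib_left)
qed

lemma Tz_cmult: assumes "Tz nrm h N f" shows "Tz nrm h N (\<lambda>x. c * f x)"
proof -
  have "nsums nrm (\<lambda>m. c * (h (N - int m) * f (of_int (N - int m)))) (c * 0)"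
    using assms unfolding Tz_def by (rule nsums_cmult[OF na])
  then show ?thesis unfolding Tz_def by (simp add: mult.left_commute)
qed

lemma Tz_sum: assumes "finite I" "\<And>i. i \<in> I \<Longrightarrow> Tz nrm h N (f i)"
  shows "Tz nrm h N (\<lambda>x. \<Sum>i\<in>I. f i x)"
proof -
  have "nsums nrm (\<lambda>m. \<Sum>i\<in>I. h (N - int m) * f i (of_int (N - int m))) (\<Sum>i\<in>I. 0)"
    using assms unfolding Tz_def by (intro nsums_sum[OF na]) auto
  then show ?thesis unfolding Tz_def by (simp add: sum_distrib_left)
qed

lemma W_lin: assumes "\<forall>j. Tz nrm h N (\<lambda>x. binom x j * g x)"
  shows "\<forall>j. Tz nrm h N (\<lambda>x. binom x j * ((x - c) * g x))"
proof
  fix j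
  have "Tz nrm h N (\<lambda>x. of_nat (Suc j) * (binom x (Suc j) * g x) + (of_nat j - c) * (binom x j * g x))"
    using assms by (intro Tz_add Tz_cmult) auto
  moreover have "of_nat (Suc j) * (binom x (Suc j) * g x) + (of_nat j - c) * (binom x j * g x)
      = binom x j * ((x - c) * g x)" for x
  proof -
    have "binom x (Suc j) * of_nat (Suc j) = binom x j * (x - of_nat j)"
      by (rule binom_Suc)
    then have "g x * (binom x (Suc j) * of_nat (Suc j)) = g x * (binom x j * (x - of_nat j))" by simp
    then show ?thesis by (simp only: algebra_simps)
  qed
  ultimately show "Tz nrm h N (\<lambda>x. binom x j * ((x - c) * g x))" by simp
qed

lemma W_prod: "finite I \<Longrightarrow> \<forall>j. Tz nrm h N (\<lambda>x. binom x j * g x) \<Longrightarrow>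
   \<forall>j. Tz nrm h N (\<lambda>x. binom x j * ((\<Prod>i\<in>I. (x - c i)) * g x))"
proof (induction I rule: finite_induct)
  case (insert i F)
  have "\<forall>j. Tz nrm h N (\<lambda>x. binom x j * ((x - c i) * ((\<Prod>i\<in>F. (x - c i)) * g x)))"
    by (rule W_lin) (rule insert.IH[OF insert.prems])
  then show ?case using insert(1,2) by (simp add: mult.assoc)
qed simp

end

lemma binom_0[simp]: "binom x 0 = 1" by (simp add: binom_def)
lemma binom_nat_lt: "t < k \<Longrightarrow> binom (of_nat t) k = 0"
  unfolding binom_def by (auto intro!: prod_zero)
lemma binom_nat_self: "binom (of_nat k :: 'a::field_char_0) k = 1"
  by (simp add: binom_gchoose flip: binomial_gbinomial)
lemma t1: "z \<ge> 0 \<Longrightarrow> (of_int z :: 'a::field_char_0) = of_nat (nat z)" by simp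
lemma t2: "\<not> z \<ge> 0 \<Longrightarrow> (of_nat k - of_int z - 1 :: 'a::field_char_0) = of_nat (nat (int k - z - 1))" 
  by (simp add: of_nat_nat)
lemma t3: "(of_nat n gchoose k :: 'a::field_char_0) \<in> \<int>"
  by (simp only: flip: binomial_gbinomial) (rule Ints_of_nat)
lemma t4: "((-1) ^ k * (of_nat n gchoose k) :: 'a::field_char_0) \<in> \<int>"
  by (intro Ints_mult Ints_power Ints_minus Ints_1 t3)
lemma binom_Ints: "binom (of_int z :: 'a::field_char_0) k \<in> \<int>"
proof (cases "z \<ge> 0")
  case True
  show ?thesis unfolding t1[OF True] binom_gchoose by (rule t3)
next
  case False
  have "binom (of_int z :: 'a) k = (-1) ^ k * ((of_nat k - of_int z - 1) gchoose k)"
    unfolding binom_gchoose by (rule gbinomial_negated_upper)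
  then show ?thesis unfolding t2[OF False] using t4 by simp
qed

theorem proposition6p9:
  fixes p :: nat and nrm :: "'a::field_char_0 \<Rightarrow> real"
    and N :: int and a :: "int \<Rightarrow> 'a"
  assumes amb: "padic_ambient p nrm"
    and coeffs: "\<forall>n\<le>N. a n \<in> Cp nrm"
    and null: "\<forall>e>0. \<exists>M. \<forall>n\<le>M. nrm (a n) < e"
    and zero: "\<forall>x\<in>Zp nrm.
                 nsuminf nrm (\<lambda>m. a (N - int m) * xm1_star nrm (N - int m) x) = 0"
  shows "\<forall>n\<le>N. a n = 0"
proof -
  from amb have na: "nonarch_abs nrm" and comp: "ncomplete nrm"
    by (simp_all add: padic_ambient_def)
  define h where "h = (\<lambda>n. a n * (-1) ^ nat \<bar>n\<bar>)"
  define c where "c = (\<lambda>(i::nat) k. (-1) ^ k * of_nat (fact k) * binom (of_nat i :: 'a) k)"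
  have cI: "c i k \<in> \<int>" for i k
  proof -
    have "binom (of_int (int i) :: 'a) k \<in> \<int>" by (rule binom_Ints)
    then show ?thesis unfolding c_def by (intro Ints_mult Ints_power Ints_minus Ints_1 Ints_of_nat) simp_all
  qed
  have step1: "Tz nrm h N (\<lambda>y. \<Sum>k<Suc i. c i k * binom y k)" for i
  proof -
    have Zp: "of_nat i \<in> Zp nrm" unfolding Zp_def nclosure_def
    proof (intro CollectI allI impI)
      fix e :: real assume "e > 0"
      then show "\<exists>y\<in>range of_int. nrm (of_nat i - y) < e"
      proof (intro bexI[of _ "of_int (int i)"])
        show "of_int (int i) \<in> range of_int" by (rule rangeI)
      qed (simp add: n_0[OF na])
    qed
    have sop: "Sop nrm (of_int n) (\<lambda>_. 1) (of_nat i) = (\<Sum>k<Suc i. c i k * binom (of_int n) k)" for n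
    proof -
      have "nsums nrm (\<lambda>k. (-1) ^ k * of_nat (fact k) * binom (of_int n) k * binom (of_nat i) k * 1)
         (\<Sum>k<Suc i. (-1) ^ k * of_nat (fact k) * binom (of_int n) k * binom (of_nat i) k * 1)"
        by (rule nsums_finite[OF na]) (simp add: binom_nat_lt)
      then have "Sop nrm (of_int n) (\<lambda>_. 1) (of_nat i) =
          (\<Sum>k<Suc i. (-1) ^ k * of_nat (fact k) * binom (of_int n) k * binom (of_nat i) k * 1)"
        unfolding Sop_def by (rule nsuminf_eq[OF na])
      then show ?thesis by (simp add: c_def mult_ac)
    qed
    have GI: "(\<Sum>k<Suc i. c i k * binom (of_int n) k) \<in> \<int>" for n
      by (intro Ints_sum Ints_mult cI binom_Ints)
    define u where "u = (\<lambda>m. a (N - int m) * xm1_star nrm (N - int m) (of_nat i))"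
    have u_eq: "u = (\<lambda>m. h (N - int m) * (\<Sum>k<Suc i. c i k * binom (of_int (N - int m)) k))"
      unfolding u_def xm1_star_def h_def sop by (simp add: mult_ac)
    have "\<exists>s. nsums nrm u s"
    proof (rule nsums_null[OF na comp], intro allI impI)
      fix e :: real assume "e > 0"
      then obtain M0 where M0: "\<forall>n\<le>M0. nrm (a n) < e" using null by blast
      show "\<exists>M. \<forall>m\<ge>M. nrm (u m) < e"
      proof (intro exI allI impI)
        fix m assume "nat (N - M0) \<le> m"
        then have "N - int m \<le> M0" by linarith
        then have "nrm (a (N - int m)) < e" using M0 by blast
        moreover have "nrm (u m) \<le> nrm (a (N - int m))"
        proof -
          have "nrm (u m) = nrm (a (N - int m)) * nrm (\<Sum>k<Suc i. c i k * binom (of_int (N - int m)) k)"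
            unfolding u_eq h_def by (simp only: n_mult[OF na] n_power_m1[OF na] mult_1_right)
          also have "\<dots> \<le> nrm (a (N - int m)) * 1"
            by (intro mult_left_mono n_Ints[OF na GI] n_ge0[OF na])
          finally show ?thesis by simp
        qed
        ultimately show "nrm (u m) < e" by linarith
      qed
    qed
    then obtain s where s: "nsums nrm u s" by blast
    have "nsuminf nrm u = 0" using zero Zp unfolding u_def by simp
    then have "s = 0" using nsuminf_eq[OF na s] by simp
    then show ?thesis using s unfolding Tz_def u_eq by simp
  qed
  have stepD: "Tz nrm h N (\<lambda>y. binom y j)" for j
  proof (induction j rule: less_induct)
    case (less j)
    have A: "Tz nrm h N (\<lambda>y. \<Sum>k<Suc j. c j k * binom y k)" by (rule step1)
    have B: "Tz nrm h N (\<lambda>y. \<Sum>k<j. c j k * binom y k)"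
    proof (rule Tz_sum[OF na])
      fix k assume "k \<in> {..<j}"
      then show "Tz nrm h N (\<lambda>y. c j k * binom y k)" by (intro Tz_cmult[OF na] less) simp
    qed simp
    have "Tz nrm h N (\<lambda>y. (\<Sum>k<Suc j. c j k * binom y k) + (-1) * (\<Sum>k<j. c j k * binom y k))"
      by (rule Tz_add[OF na A Tz_cmult[OF na B]])
    then have C: "Tz nrm h N (\<lambda>y. c j j * binom y j)" by simp
    have cnz: "c j j \<noteq> 0" by (simp add: c_def binom_nat_self)
    have "Tz nrm h N (\<lambda>y. inverse (c j j) * (c j j * binom y j))" by (rule Tz_cmult[OF na C])
    moreover have "(\<lambda>y. inverse (c j j) * (c j j * binom y j)) = (\<lambda>y. binom y j)"
      by (rule ext) (simp add: cnz mult.assoc[symmetric])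
    ultimately show ?case by simp
  qed
  have W1: "\<forall>j. Tz nrm h N (\<lambda>x. binom x j * 1)" using stepD by simp
  show ?thesis
  proof (intro allI impI)
    fix n0 assume n0: "n0 \<le> N"
    show "a n0 = 0"
    proof (rule n_zero[OF na])
      fix e :: real assume e: "e > 0"
      obtain M0 where M0: "\<forall>n\<le>M0. nrm (a n) < e" using null e by blast
      show "nrm (a n0) < e"
      proof (cases "n0 \<le> M0")
        case True then show ?thesis using M0 by blast
      next
        case False
        define L where "L = nat (n0 - M0)"
        define R where "R = nat (N - n0)"
        define Q where "Q = (\<lambda>y::'a. binom (y - of_int M0) L * binom (of_int N - y) R)"
        define C where "C = ((-1) ^ R / (of_nat (fact L) * of_nat (fact R)) :: 'a)"
        have Qeq: "Q y = C * ((\<Prod>i<L. (y - (of_int M0 + of_nat i))) * ((\<Prod>i<R. (y - (of_int N - of_nat i))) * 1))" for y :: 'a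
        proof -
          have p1: "(\<Prod>i<L. (y - of_int M0 - of_nat i)) = (\<Prod>i<L. (y - (of_int M0 + of_nat i)))"
            by (simp add: algebra_simps)
          have p2: "(\<Prod>i<R'. (of_int N - y - of_nat i)) = (-1) ^ R' * (\<Prod>i<R'. (y - (of_int N - of_nat i)))" for R'
            by (induction R') (simp_all add: algebra_simps)
          show ?thesis unfolding Q_def binom_def C_def p1 p2 by (simp add: mult_ac)
        qed
        have WQ: "\<forall>j. Tz nrm h N (\<lambda>x. binom x j * (C * ((\<Prod>i<L. (x - (of_int M0 + of_nat i))) * ((\<Prod>i<R. (x - (of_int N - of_nat i))) * 1))))"
        proof -
          have "\<forall>j. Tz nrm h N (\<lambda>x. binom x j * ((\<Prod>i<L. (x - (of_int M0 + of_nat i))) * ((\<Prod>i<R. (x - (of_int N - of_nat i))) * 1)))"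
            by (intro W_prod[OF na] W1) simp_all
          then show ?thesis
          proof (intro allI)
            fix j
            assume "\<forall>j. Tz nrm h N (\<lambda>x. binom x j * ((\<Prod>i<L. (x - (of_int M0 + of_nat i))) * ((\<Prod>i<R. (x - (of_int N - of_nat i))) * 1)))"
            then have "Tz nrm h N (\<lambda>x. C * (binom x j * ((\<Prod>i<L. (x - (of_int M0 + of_nat i))) * ((\<Prod>i<R. (x - (of_int N - of_nat i))) * 1))))"
              by (intro Tz_cmult[OF na]) simp
            then show "Tz nrm h N (\<lambda>x. binom x j * (C * ((\<Prod>i<L. (x - (of_int M0 + of_nat i))) * ((\<Prod>i<R. (x - (of_int N - of_nat i))) * 1))))"
              by (simp only: mult.left_commute[of C])
          qed
        qed
        have "Q = (\<lambda>x. binom x 0 * (C * ((\<Prod>i<L. (x - (of_int M0 + of_nat i))) * ((\<Prod>i<R. (x - (of_int N - of_nat i))) * 1))))"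
          by (rule ext) (simp only: Qeq binom_0 mult_1_left)
        then have TQ: "Tz nrm h N Q"
          using WQ[rule_format, of 0] by (simp only:)
        have Q0: "Q (of_int n0) = 1"
        proof -
          have "(of_int n0 - of_int M0 :: 'a) = of_nat L" using False by (simp add: L_def)
          moreover have "(of_int N - of_int n0 :: 'a) = of_nat R" using n0 by (simp add: R_def)
          ultimately show ?thesis by (simp add: Q_def binom_nat_self)
        qed
        have Qz: "Q (of_int n) = 0" if "M0 \<le> n" "n \<le> N" "n \<noteq> n0" for n
        proof (cases "n < n0")
          case True
          have "(of_int n - of_int M0 :: 'a) = of_nat (nat (n - M0))" using that by simp
          moreover have "nat (n - M0) < L" using True that by (simp add: L_def)
          ultimately show ?thesis by (simp add: Q_def binom_nat_lt)
        next
          case False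
          have "(of_int N - of_int n :: 'a) = of_nat (nat (N - n))" using that by simp
          moreover have "nat (N - n) < R" using False that by (simp add: R_def)
          ultimately show ?thesis by (simp add: Q_def binom_nat_lt)
        qed
        have QI: "Q (of_int n) \<in> \<int>" for n
        proof -
          have "Q (of_int n) = binom (of_int (n - M0)) L * binom (of_int (N - n)) R" by (simp add: Q_def)
          then show ?thesis by (simp only:) (intro Ints_mult binom_Ints)
        qed
        define t where "t = (\<lambda>m. h (N - int m) * Q (of_int (N - int m)))"
        have "nsums nrm t 0" using TQ unfolding Tz_def t_def .
        then obtain K1 where K1: "\<forall>m\<ge>K1. nrm ((\<Sum>k<m. t k) - 0) < e"
          using e unfolding nsums_def nconv_def by blast
        define K where "K = max K1 (Suc (nat (N - M0)))"
        define m0 where "m0 = nat (N - n0)"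
        have m0K: "m0 \<in> {..<K}" using False n0 by (simp add: K_def m0_def)
        have tm0: "t m0 = h n0" using n0 Q0 by (simp add: t_def m0_def)
        have hn: "nrm (h n) = nrm (a n)" for n by (simp add: h_def n_mult[OF na] n_power_m1[OF na])
        have rest: "nrm (\<Sum>k\<in>{..<K} - {m0}. t k) < e"
        proof (rule n_sum_less[OF na], simp, rule e)
          fix k assume k: "k \<in> {..<K} - {m0}"
          show "nrm (t k) < e"
          proof (cases "M0 \<le> N - int k")
            case True
            have "N - int k \<noteq> n0" using k by (auto simp: m0_def)
            then have "t k = 0" using True Qz[of "N - int k"] by (simp add: t_def)
            then show ?thesis using e by (simp add: n_0[OF na])
          next
            case False
            have "nrm (t k) = nrm (a (N - int k)) * nrm (Q (of_int (N - int k)))"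
              by (simp add: t_def n_mult[OF na] hn)
            also have "\<dots> \<le> nrm (a (N - int k)) * 1"
              by (intro mult_left_mono n_Ints[OF na QI] n_ge0[OF na])
            also have "\<dots> < e" using M0 False by simp
            finally show ?thesis .
          qed
        qed
        have split: "(\<Sum>k<K. t k) = t m0 + (\<Sum>k\<in>{..<K} - {m0}. t k)"
          using m0K by (simp add: sum.remove)
        have SK: "nrm (\<Sum>k<K. t k) < e" using K1 by (simp add: K_def)
        have "h n0 = (\<Sum>k<K. t k) + - (\<Sum>k\<in>{..<K} - {m0}. t k)" using split tm0 by simp
        then have "nrm (h n0) \<le> max (nrm (\<Sum>k<K. t k)) (nrm (- (\<Sum>k\<in>{..<K} - {m0}. t k)))"
          using n_add[OF na, of "\<Sum>k<K. t k" "- (\<Sum>k\<in>{..<K} - {m0}. t k)"] by simp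
        also have "\<dots> < e" using SK rest n_uminus[OF na] by simp
        finally show ?thesis using hn by simp
      qed
    qed
  qed
qed

end
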